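(* Let $R$ be a local renormalisation operator, built from a permutation-invariant map $r:\mathcal{Q}\to\mathbb{R}$ and extended to $\mathring{\mathcal{N}}\cup\mathring{\mathcal{W}}$ by the formula $R(\tau)=q_F\tau+\sum_{\tau'\in\mathcal{Q}}r(\tau')C_-(\tau',\tau)$. Then for every $\tau\in\mathring{\mathcal{N}}\cup\mathring{\mathcal{W}}$, $$\Delta R\tau=(R\otimes\mathrm{Id})\Delta\tau.$$
   Context: Fix $d\ge1$, $\delta>0$. Trees: $\widehat{\mathcal{T}}_r$ is the smallest set containing generators $\mathbf{1},\mathbf{X}_1,\dots,\mathbf{X}_d,\Xi$ and closed under $(\tau_1,\tau_2,\tau_3)\mapsto\mathcal{I}(\tau_1)\mathcal{I}(\tau_2)\mathcal{I}(\tau_3)$ (formal non-commutative tree product of planted trees). Orders: $|\mathbf{1}|=-2$, $|\mathbf{X}_i|=-1$, $|\Xi|=-3+\delta$, $|\mathcal{I}(\tau_1)\mathcal{I}(\tau_2)\mathcal{I}(\tau_3)|=6+\sum|\tau_k|$, $|\mathcal{I}(\tau)|=|\tau|+2$. $\mathrm{Poly}=\{\mathbf{1},\mathbf{X}_1,..,\mathbf{X}_d\}$, $\mathcal{W}=\{|\tau|<-2\}$, $\mathring{\mathcal{W}}=\mathcal{W}\setminus\{\Xi\}$, $\mathcal{N}=\{-2\le|\tau|\le0\}$, $\mathring{\mathcal{N}}=\mathcal{N}\setminus\mathrm{Poly}$, $\widetilde{\mathcal{N}}=\{\tau\in\mathring{\mathcal{N}}:-1<|\tau|<0\}$, $\mathcal{T}_r=\mathcal{W}\cup\mathring{\mathcal{N}}$.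 Standing assumption: no tree in $\mathcal{W}\cup\mathring{\mathcal{N}}$ has integer order. Truncation convention: a tree product of planted trees with positive total order is $0$. Derivative edges: symbols $\mathcal{I}^+_i(\tau)$ for $\tau\in\widetilde{\mathcal{N}}\cup\{\mathbf{X}_i\}$ with $\mathcal{I}^+_i(\mathbf{X}_j)=0$ ($j\ne i$), $\mathcal{I}^+_i(\tau)=0$ for $\tau\in\mathring{\mathcal{N}}\setminus\widetilde{\mathcal{N}}$; symbols $\mathcal{I}^-_i(\tau)$ for $\tau\in\mathcal{T}_r$ (order $|\tau|+1$), with $\mathcal{I}^-_i(\mathbf{X}_i)=\mathcal{I}^+_i(\mathbf{X}_i)$, $\mathcal{I}^-_i(\mathbf{1})=0$, $\mathcal{I}^-_i(\mathbf{X}_j)=0$ for $j\ne i$. $\mathcal{T}_{l,-}$ is the set of planted trees $\mathcal{I}(\tau)$ ($\tau\in\mathcal{T}_r\cup\mathrm{Poly}$), $\mathcal{I}^-_i(\tau)$ ($\tau\in\mathcal{T}_r$), $\mathcal{I}^+_i(\mathbf{X}_i)$; $\mathcal{T}^{\mathrm{cen}}=\{\mathcal{I}(\tau):\tau\in\mathcal{N}\}\cup\{\mathcal{I}^+_i(\tau):\tau\in\widetilde{\mathcal{N}}\cup\{\mathbf{X}_i\}\}$. $\mathrm{Alg}(S)$ is the free unital non-commutative algebra on planted trees $S$ (forest product $\cdot$, unit $1$ = empty forest). Coproduct $\Delta$, recursively: $\Delta\mathcal{I}(\mathbf{1})=\mathcal{I}(\mathbf{1})\otimes\mathcal{I}(\mathbf{1})$;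 $\Delta\mathcal{I}(\mathbf{X}_i)=\mathcal{I}(\mathbf{1})\otimes\mathcal{I}(\mathbf{X}_i)+\mathcal{I}(\mathbf{X}_i)\otimes\mathcal{I}^+_i(\mathbf{X}_i)$; $\Delta\mathcal{I}^+_i(\mathbf{X}_i)=\mathcal{I}^+_i(\mathbf{X}_i)\otimes\mathcal{I}^+_i(\mathbf{X}_i)$; $\Delta w=w\otimes1$, $\Delta\mathcal{I}(w)=\mathcal{I}(w)\otimes1$ ($w\in\mathcal{W}$); for $\tau\in\mathring{\mathcal{N}}$: $\Delta\mathcal{I}(\tau)=\mathcal{I}(\mathbf{1})\otimes\mathcal{I}(\tau)+\sum_i\mathcal{I}(\mathbf{X}_i)\otimes\mathcal{I}^+_i(\tau)+(\mathcal{I}\otimes\mathrm{Id})\Delta\tau$; for $\tau\in\widetilde{\mathcal{N}}$: $\Delta\mathcal{I}^+_i(\tau)=\mathcal{I}^+_i(\mathbf{X}_i)\otimes\mathcal{I}^+_i(\tau)+(\mathcal{I}^+_i\otimes\mathrm{Id})\Delta\tau$; for $\mathcal{I}(\tau_1)\mathcal{I}(\tau_2)\mathcal{I}(\tau_3)\in\mathring{\mathcal{N}}$: $\Delta(\mathcal{I}(\tau_1)\mathcal{I}(\tau_2)\mathcal{I}(\tau_3))=\prod_k\Delta\mathcal{I}(\tau_k)$ with $\prod_k(\sigma_k\otimes a_k)=\sigma_1\sigma_2\sigma_3\otimes a_1\cdot a_2\cdot a_3$; for $\tau\in\mathcal{T}_r$: $\Delta\mathcal{I}^-_i(\tau)=(\mathcal{I}^-_i\otimes\mathrm{Id})\Delta\tau+\mathcal{I}^+_i(\mathbf{X}_i)\otimes\mathcal{I}^+_i(\tau)$.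 $\Delta$ is linear, and on forests multiplicative: $\Delta1=1\otimes1$, $\Delta(\sigma_1\cdots\sigma_n)=(\Delta\sigma_1)\cdots(\Delta\sigma_n)$ componentwise. $C_-(\bar\tau,\tau)$ for $\bar\tau,\tau\in\mathcal{N}\cup\mathcal{W}$, a forest of planted trees in $\mathcal{T}_{l,-}$ or $0$, defined recursively in $\tau$: $C_-(\mathbf{1},\mathbf{1})=\mathcal{I}(\mathbf{1})$; $C_-(\mathbf{1},\mathbf{X}_j)=\mathcal{I}(\mathbf{X}_j)$; $C_-(\mathbf{X}_i,\mathbf{X}_j)=\mathcal{I}^-_i(\mathbf{X}_j)$; $C_-(\mathbf{1},\Xi)=\mathcal{I}(\Xi)$, $C_-(\mathbf{X}_i,\Xi)=\mathcal{I}^-_i(\Xi)$, $C_-(\Xi,\Xi)=1$; for $\tau=\mathcal{I}(\tau_1)\mathcal{I}(\tau_2)\mathcal{I}(\tau_3)$: $C_-(\mathbf{1},\tau)=\mathcal{I}(\tau)$, $C_-(\mathbf{X}_i,\tau)=\mathcal{I}^-_i(\tau)$, $C_-(\mathcal{I}(\bar\tau_1)\mathcal{I}(\bar\tau_2)\mathcal{I}(\bar\tau_3),\tau)=\prod_kC_-(\bar\tau_k,\tau_k)$ (forest product); all other values are $0$. $\mathcal{Q}$ is the set of trees $\mathcal{I}(\tau_1)\mathcal{I}(\tau_2)\mathcal{I}(\tau_3)\in\mathring{\mathcal{N}}\cup\mathring{\mathcal{W}}$ with no $\tau_k\in\{\mathbf{X}_1,\dots,\mathbf{X}_d\}$ and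 at most one $\tau_k=\mathbf{1}$. $q_F$ maps $\mathcal{I}(\tau_1)\mathcal{I}(\tau_2)\mathcal{I}(\tau_3)$ to the forest $\mathcal{I}(\tau_1)\cdot\mathcal{I}(\tau_2)\cdot\mathcal{I}(\tau_3)$. Given $r:\mathcal{Q}\to\mathbb{R}$ invariant under reordering the factors of tree products, the associated local renormalisation operator is $R(\tau)=q_F\tau+\sum_{\tau'\in\mathcal{Q}}r(\tau')C_-(\tau',\tau)\in\mathrm{Alg}(\mathcal{T}_{l,-})$; $R$ is applied linearly to the left tensor factor of $\Delta\tau$. *)

theory Defs
  imports Complex_Main "HOL-Library.Poly_Mapping"
begin

text \<open>Trees of \<open>\<widehat>T_r\<close>: generators \<open>1\<close>, \<open>X_i\<close>, \<open>\<Xi>\<close>, and the (non-commutative)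
  tree product \<open>P a b c = I(a) I(b) I(c)\<close>.\<close>

datatype tree = One | X nat | Xi | P tree tree tree

fun valid :: "nat \<Rightarrow> tree \<Rightarrow> bool" where
  "valid d One = True"
| "valid d (X i) = (1 \<le> i \<and> i \<le> d)"
| "valid d Xi = True"
| "valid d (P a b c) = (valid d a \<and> valid d b \<and> valid d c)"

fun ord :: "real \<Rightarrow> tree \<Rightarrow> real" where
  "ord \<delta> One = -2"
| "ord \<delta> (X i) = -1"
| "ord \<delta> Xi = -3 + \<delta>"
| "ord \<delta> (P a b c) = 6 + ord \<delta> a + ord \<delta> b + ord \<delta> c"

definition isPoly :: "tree \<Rightarrow> bool" where
  "isPoly \<tau> \<longleftrightarrow> \<tau> = One \<or> (\<exists>i. \<tau> = X i)"

definition inW :: "real \<Rightarrow> tree \<Rightarrow> bool" where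
  "inW \<delta> \<tau> \<longleftrightarrow> ord \<delta> \<tau> < -2"

definition inWo :: "real \<Rightarrow> tree \<Rightarrow> bool" where
  "inWo \<delta> \<tau> \<longleftrightarrow> inW \<delta> \<tau> \<and> \<tau> \<noteq> Xi"

definition inN :: "real \<Rightarrow> tree \<Rightarrow> bool" where
  "inN \<delta> \<tau> \<longleftrightarrow> -2 \<le> ord \<delta> \<tau> \<and> ord \<delta> \<tau> \<le> 0"

definition inNo :: "real \<Rightarrow> tree \<Rightarrow> bool" where
  "inNo \<delta> \<tau> \<longleftrightarrow> inN \<delta> \<tau> \<and> \<not> isPoly \<tau>"

definition inNt :: "real \<Rightarrow> tree \<Rightarrow> bool" where
  "inNt \<delta> \<tau> \<longleftrightarrow> inNo \<delta> \<tau> \<and> -1 < ord \<delta> \<tau> \<and> ord \<delta> \<tau> < 0"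

text \<open>Planted trees: \<open>I \<tau>\<close> is \<open>\<I>(\<tau>)\<close>, \<open>Ip i \<tau>\<close> is \<open>\<I>^+_i(\<tau>)\<close>, \<open>Im i \<tau>\<close> is \<open>\<I>^-_i(\<tau>)\<close>.
  Forests (elements of the free non-commutative monoid) are lists; the empty list is the
  unit \<open>1\<close>, concatenation the forest product.  Elements of the algebras / tensor products
  are finitely supported real linear combinations of basis elements (\<open>\<Rightarrow>\<^sub>0 real\<close>);
  the tensor \<open>a \<otimes> b\<close> of basis elements is the pair \<open>(a, b)\<close>.\<close>

datatype planted = I tree | Ip nat tree | Im nat tree

definition sg :: "'a \<Rightarrow> 'a \<Rightarrow>\<^sub>0 real" where
  "sg k = Poly_Mapping.single k 1"

definition smult :: "real \<Rightarrow> ('a \<Rightarrow>\<^sub>0 real) \<Rightarrow> 'a \<Rightarrow>\<^sub>0 real" where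
  "smult c p = Poly_Mapping.map ((*) c) p"

definition lin :: "('a \<Rightarrow> 'b \<Rightarrow>\<^sub>0 real) \<Rightarrow> ('a \<Rightarrow>\<^sub>0 real) \<Rightarrow> 'b \<Rightarrow>\<^sub>0 real" where
  "lin f p = (\<Sum>k\<in>Poly_Mapping.keys p. smult (Poly_Mapping.lookup p k) (f k))"

text \<open>Identifications: \<open>\<I>^+_i(X_i)\<close> is a basis element, \<open>\<I>^+_i(\<tau>)\<close> for \<open>\<tau> \<in> \<widetilde>N\<close> is a basis
  element, and \<open>\<I>^+_i\<close> of anything else is \<open>0\<close>.  \<open>\<I>^-_i(X_i) = \<I>^+_i(X_i)\<close>,
  \<open>\<I>^-_i(1) = \<I>^-_i(X_j) = 0\<close> (\<open>j \<noteq> i\<close>).\<close>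

definition mkIp :: "real \<Rightarrow> nat \<Rightarrow> tree \<Rightarrow> planted list \<Rightarrow>\<^sub>0 real" where
  "mkIp \<delta> i \<tau> = (if \<tau> = X i then sg [Ip i (X i)]
                  else if inNt \<delta> \<tau> then sg [Ip i \<tau>] else 0)"

definition mkIm :: "nat \<Rightarrow> tree \<Rightarrow> planted list \<Rightarrow>\<^sub>0 real" where
  "mkIm i \<tau> = (if \<tau> = X i then sg [Ip i (X i)]
               else if isPoly \<tau> then 0 else sg [Im i \<tau>])"

text \<open>Elements of the form \<open>(\<sigma>, f)\<close> with \<open>\<sigma>\<close> a tree stand for \<open>\<I>(\<sigma>) \<otimes> f\<close> in \<open>mul3\<close>'s inputs,
  and for \<open>\<sigma> \<otimes> f\<close> in its output.\<close>

definition mul3 :: "real \<Rightarrow> (tree \<times> planted list \<Rightarrow>\<^sub>0 real) \<Rightarrow> (tree \<times> planted list \<Rightarrow>\<^sub>0 real)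
     \<Rightarrow> (tree \<times> planted list \<Rightarrow>\<^sub>0 real) \<Rightarrow> (tree \<times> planted list \<Rightarrow>\<^sub>0 real)" where
  "mul3 \<delta> p1 p2 p3 =
     lin (\<lambda>(s1, f1). lin (\<lambda>(s2, f2). lin (\<lambda>(s3, f3).
        if ord \<delta> (P s1 s2 s3) \<le> 0 then sg (P s1 s2 s3, f1 @ f2 @ f3) else 0) p3) p2) p1"

text \<open>\<open>dI d \<delta> \<tau> D\<close> is \<open>\<Delta>\<I>(\<tau>)\<close>, given \<open>D = \<Delta>\<tau>\<close>; a basis element \<open>(\<sigma>, f)\<close> of the result
  stands for \<open>\<I>(\<sigma>) \<otimes> f\<close>.\<close>

definition dI :: "nat \<Rightarrow> real \<Rightarrow> tree \<Rightarrow> (tree \<times> planted list \<Rightarrow>\<^sub>0 real)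
     \<Rightarrow> (tree \<times> planted list \<Rightarrow>\<^sub>0 real)" where
  "dI d \<delta> \<tau> D =
    (case \<tau> of
       One \<Rightarrow> sg (One, [I One])
     | X i \<Rightarrow> sg (One, [I (X i)]) + sg (X i, [Ip i (X i)])
     | _ \<Rightarrow> if inW \<delta> \<tau> then sg (\<tau>, [])
           else if inNo \<delta> \<tau> then
             sg (One, [I \<tau>])
             + (\<Sum>i\<in>{1..d}. lin (\<lambda>w. sg (X i, w)) (mkIp \<delta> i \<tau>))
             + D
           else 0)"

text \<open>\<open>deltaT d \<delta> \<tau>\<close> is \<open>\<Delta>\<tau>\<close> for trees \<open>\<tau> \<in> W \<union> N\<^sup>o\<close>; a basis element \<open>(\<sigma>, f)\<close> stands for
  \<open>\<sigma> \<otimes> f\<close>.  (\<open>\<Delta>\<close> is not defined on polynomial trees; there the value \<open>0\<close> is a dummy.)\<close>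

fun deltaT :: "nat \<Rightarrow> real \<Rightarrow> tree \<Rightarrow> (tree \<times> planted list \<Rightarrow>\<^sub>0 real)" where
  "deltaT d \<delta> One = 0"
| "deltaT d \<delta> (X i) = 0"
| "deltaT d \<delta> Xi = sg (Xi, [])"
| "deltaT d \<delta> (P a b c) =
     (if inW \<delta> (P a b c) then sg (P a b c, [])
      else if ord \<delta> (P a b c) \<le> 0 then
        mul3 \<delta> (dI d \<delta> a (deltaT d \<delta> a)) (dI d \<delta> b (deltaT d \<delta> b)) (dI d \<delta> c (deltaT d \<delta> c))
      else 0)"

definition deltaP :: "nat \<Rightarrow> real \<Rightarrow> planted \<Rightarrow> (planted list \<times> planted list \<Rightarrow>\<^sub>0 real)" where
  "deltaP d \<delta> p =
    (case p of
       I \<tau> \<Rightarrow> lin (\<lambda>(\<sigma>, f). sg ([I \<sigma>], f)) (dI d \<delta> \<tau> (deltaT d \<delta> \<tau>))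
     | Ip i \<tau> \<Rightarrow>
         (if \<tau> = X i then sg ([Ip i (X i)], [Ip i (X i)])
          else if inNt \<delta> \<tau> then
            sg ([Ip i (X i)], [Ip i \<tau>])
            + lin (\<lambda>(\<sigma>, f). lin (\<lambda>w. sg (w, f)) (mkIp \<delta> i \<sigma>)) (deltaT d \<delta> \<tau>)
          else 0)
     | Im i \<tau> \<Rightarrow>
         (if \<tau> = X i then sg ([Ip i (X i)], [Ip i (X i)])
          else if isPoly \<tau> then 0
          else lin (\<lambda>(\<sigma>, f). lin (\<lambda>w. sg (w, f)) (mkIm i \<sigma>)) (deltaT d \<delta> \<tau>)
               + lin (\<lambda>w. sg ([Ip i (X i)], w)) (mkIp \<delta> i \<tau>)))"

fun deltaF :: "nat \<Rightarrow> real \<Rightarrow> planted list \<Rightarrow> (planted list \<times> planted list \<Rightarrow>\<^sub>0 real)" where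
  "deltaF d \<delta> [] = sg ([], [])"
| "deltaF d \<delta> (p # ps) =
     lin (\<lambda>(a, b). lin (\<lambda>(c, e). sg (a @ c, b @ e)) (deltaF d \<delta> ps)) (deltaP d \<delta> p)"

fun Cm :: "tree \<Rightarrow> tree \<Rightarrow> planted list \<Rightarrow>\<^sub>0 real" where
  "Cm One One = sg [I One]"
| "Cm One (X j) = sg [I (X j)]"
| "Cm (X i) (X j) = mkIm i (X j)"
| "Cm One Xi = sg [I Xi]"
| "Cm (X i) Xi = mkIm i Xi"
| "Cm Xi Xi = sg []"
| "Cm One (P a b c) = sg [I (P a b c)]"
| "Cm (X i) (P a b c) = mkIm i (P a b c)"
| "Cm (P a' b' c') (P a b c) =
     lin (\<lambda>u. lin (\<lambda>v. lin (\<lambda>w. sg (u @ v @ w)) (Cm c' c)) (Cm b' b)) (Cm a' a)"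
| "Cm _ _ = 0"

fun qF :: "tree \<Rightarrow> planted list \<Rightarrow>\<^sub>0 real" where
  "qF (P a b c) = sg [I a, I b, I c]"
| "qF _ = 0"

definition Qset :: "nat \<Rightarrow> real \<Rightarrow> tree set" where
  "Qset d \<delta> = {\<tau>. valid d \<tau> \<and> (inNo \<delta> \<tau> \<or> inWo \<delta> \<tau>) \<and>
      (\<exists>a b c. \<tau> = P a b c
         \<and> (\<forall>j. a \<noteq> X j \<and> b \<noteq> X j \<and> c \<noteq> X j)
         \<and> \<not> (a = One \<and> b = One) \<and> \<not> (a = One \<and> c = One) \<and> \<not> (b = One \<and> c = One))}"

definition Rop :: "nat \<Rightarrow> real \<Rightarrow> (tree \<Rightarrow> real) \<Rightarrow> tree \<Rightarrow> planted list \<Rightarrow>\<^sub>0 real" where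
  "Rop d \<delta> r \<tau> = qF \<tau> + (\<Sum>\<tau>'\<in>Qset d \<delta>. smult (r \<tau>') (Cm \<tau>' \<tau>))"

definition DeltaAlg :: "nat \<Rightarrow> real \<Rightarrow> (planted list \<Rightarrow>\<^sub>0 real) \<Rightarrow> (planted list \<times> planted list \<Rightarrow>\<^sub>0 real)" where
  "DeltaAlg d \<delta> x = lin (deltaF d \<delta>) x"

definition RtensId :: "nat \<Rightarrow> real \<Rightarrow> (tree \<Rightarrow> real) \<Rightarrow> (tree \<times> planted list \<Rightarrow>\<^sub>0 real)
     \<Rightarrow> (planted list \<times> planted list \<Rightarrow>\<^sub>0 real)" where
  "RtensId d \<delta> r D = lin (\<lambda>(\<sigma>, f). lin (\<lambda>w. sg (w, f)) (Rop d \<delta> r \<sigma>)) D"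

end

theory Submission
  imports Defs
begin

lemma lookup_smult[simp]: "Poly_Mapping.lookup (smult c p) k = c * Poly_Mapping.lookup p k"
  by (simp add: smult_def map.rep_eq when_def)

lemma lookup_sg: "Poly_Mapping.lookup (sg k) x = (if k = x then 1 else 0)"
  by (simp add: sg_def lookup_single when_def)

lemma keys_smult: "Poly_Mapping.keys (smult c p) \<subseteq> Poly_Mapping.keys p"
  by (auto simp: in_keys_iff)

lemma keys_sg[simp]: "Poly_Mapping.keys (sg k) = {k}"
  by (simp add: sg_def)

lemma lookup_lin: "Poly_Mapping.lookup (lin f p) x = (\<Sum>k\<in>Poly_Mapping.keys p. Poly_Mapping.lookup p k * Poly_Mapping.lookup (f k) x)"
  by (simp add: lin_def lookup_sum)

lemma lookup_lin_sub:
  assumes "finite S" "Poly_Mapping.keys p \<subseteq> S"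
  shows "Poly_Mapping.lookup (lin f p) x = (\<Sum>k\<in>S. Poly_Mapping.lookup p k * Poly_Mapping.lookup (f k) x)"
  unfolding lookup_lin
  by (rule sum.mono_neutral_left) (use assms in \<open>auto simp: in_keys_iff\<close>)

lemma lin_add: "lin f (p + q) = lin f p + lin f q"
proof (rule poly_mapping_eqI)
  fix x
  let ?S = "Poly_Mapping.keys p \<union> Poly_Mapping.keys q"
  have "Poly_Mapping.lookup (lin f (p+q)) x = (\<Sum>k\<in>?S. Poly_Mapping.lookup (p+q) k * Poly_Mapping.lookup (f k) x)"
    by (rule lookup_lin_sub) (auto simp: keys_add)
  also have "\<dots> = (\<Sum>k\<in>?S. Poly_Mapping.lookup p k * Poly_Mapping.lookup (f k) x) + (\<Sum>k\<in>?S. Poly_Mapping.lookup q k * Poly_Mapping.lookup (f k) x)"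
    by (simp add: lookup_add distrib_right sum.distrib)
  also have "\<dots> = Poly_Mapping.lookup (lin f p) x + Poly_Mapping.lookup (lin f q) x"
    by (simp add: lookup_lin_sub[where S="?S"])
  finally show "Poly_Mapping.lookup (lin f (p + q)) x = Poly_Mapping.lookup (lin f p + lin f q) x"
    by (simp add: lookup_add)
qed

lemma lin_zero[simp]: "lin f 0 = 0"
  by (simp add: lin_def)

lemma smult_one[simp]: "smult 1 p = p"
  by (rule poly_mapping_eqI) simp

lemma smult_zero[simp]: "smult c 0 = 0"
  by (rule poly_mapping_eqI) simp

lemma lin_sg[simp]: "lin f (sg k) = f k"
  by (simp add: lin_def sg_def)

lemma lin_smult: "lin f (smult c p) = smult c (lin f p)"
proof (rule poly_mapping_eqI)
  fix x
  have "Poly_Mapping.lookup (lin f (smult c p)) x = (\<Sum>k\<in>Poly_Mapping.keys p. c * Poly_Mapping.lookup p k * Poly_Mapping.lookup (f k) x)"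
    by (subst lookup_lin_sub[where S="Poly_Mapping.keys p"]) (auto simp: keys_smult)
  then show "Poly_Mapping.lookup (lin f (smult c p)) x = Poly_Mapping.lookup (smult c (lin f p)) x"
    by (simp add: lookup_lin sum_distrib_left mult.assoc)
qed

lemma lin_sum: "lin f (sum g A) = sum (\<lambda>x. lin f (g x)) A"
  by (induction A rule: infinite_finite_induct) (auto simp: lin_add)

lemma lin_fadd: "lin (\<lambda>k. f k + g k) p = lin f p + lin g p"
  by (rule poly_mapping_eqI) (simp add: lookup_lin lookup_add distrib_left sum.distrib)

lemma lin_fzero[simp]: "lin (\<lambda>k. 0) p = 0"
  by (rule poly_mapping_eqI) (simp add: lookup_lin)

lemma lin_fsmult: "lin (\<lambda>k. smult c (f k)) p = smult c (lin f p)"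
  by (rule poly_mapping_eqI) (simp add: lookup_lin sum_distrib_left algebra_simps)

lemma lin_fsum: "lin (\<lambda>k. sum (\<lambda>x. g x k) A) p = sum (\<lambda>x. lin (g x) p) A"
  by (induction A rule: infinite_finite_induct) (auto simp: lin_fadd)

lemma lin_cong: "(\<And>k. k \<in> Poly_Mapping.keys p \<Longrightarrow> f k = g k) \<Longrightarrow> lin f p = lin g p"
  by (simp add: lin_def)

lemma lin_comp: "lin g (lin f p) = lin (\<lambda>k. lin g (f k)) p"
proof -
  have "lin f p = (\<Sum>k\<in>Poly_Mapping.keys p. smult (Poly_Mapping.lookup p k) (f k))"
    by (simp add: lin_def)
  then show ?thesis by (simp add: lin_sum lin_smult lin_def[of "\<lambda>k. lin g (f k)"])
qed

lemma lin_swap: "lin (\<lambda>x. lin (\<lambda>y. h x y) q) p = lin (\<lambda>y. lin (\<lambda>x. h x y) p) q"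
  by (rule poly_mapping_eqI)
     (simp add: lookup_lin sum_distrib_left mult.left_commute sum.swap[where A="Poly_Mapping.keys p"])

lemma lin_if0: "lin (\<lambda>k. if c then f k else 0) p = (if c then lin f p else 0)"
  by simp

lemma lin_id[simp]: "lin sg p = p"
proof (rule poly_mapping_eqI)
  fix x show "Poly_Mapping.lookup (lin sg p) x = Poly_Mapping.lookup p x"
  proof -
    have "(\<Sum>k\<in>Poly_Mapping.keys p. Poly_Mapping.lookup p k * (if k = x then 1 else 0))
        = (\<Sum>k\<in>Poly_Mapping.keys p. if k = x then Poly_Mapping.lookup p k else 0)"
      by (rule sum.cong) auto
    also have "\<dots> = Poly_Mapping.lookup p x"
      by (simp add: sum.delta' in_keys_iff)
    finally show ?thesis by (simp add: lookup_lin lookup_sg)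
  qed
qed

lemma keys_lin: "Poly_Mapping.keys (lin f p) \<subseteq> (\<Union>k\<in>Poly_Mapping.keys p. Poly_Mapping.keys (f k))"
  by (auto simp: in_keys_iff lookup_lin intro: ccontr elim!: sum.not_neutral_contains_not_neutral)

lemma keys_sum: "Poly_Mapping.keys (sum g A) \<subseteq> (\<Union>x\<in>A. Poly_Mapping.keys (g x))"
  by (induction A rule: infinite_finite_induct) (use keys_add in fastforce)+


definition mulT :: "('a list \<times> 'b list \<Rightarrow>\<^sub>0 real) \<Rightarrow> ('a list \<times> 'b list \<Rightarrow>\<^sub>0 real) \<Rightarrow> ('a list \<times> 'b list \<Rightarrow>\<^sub>0 real)" where
  "mulT U V = lin (\<lambda>(a, b). lin (\<lambda>(c, e). sg (a @ c, b @ e)) V) U"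

definition mulF :: "('a list \<Rightarrow>\<^sub>0 real) \<Rightarrow> ('a list \<Rightarrow>\<^sub>0 real) \<Rightarrow> ('a list \<Rightarrow>\<^sub>0 real)" where
  "mulF U V = lin (\<lambda>u. lin (\<lambda>v. sg (u @ v)) V) U"

definition iota :: "'b \<Rightarrow> ('a \<Rightarrow>\<^sub>0 real) \<Rightarrow> ('a \<times> 'b \<Rightarrow>\<^sub>0 real)" where
  "iota f C = lin (\<lambda>w. sg (w, f)) C"

lemma lin_id': "lin (\<lambda>(a, b). sg (a, b)) p = p"
  using lin_id[of p] by (simp add: case_prod_beta')

lemma mulT_linL: "mulT (lin F p) V = lin (\<lambda>k. mulT (F k) V) p"
  unfolding mulT_def by (rule lin_comp)

lemma mulT_linR: "mulT U (lin F q) = lin (\<lambda>k. mulT U (F k)) q"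
proof -
  have "mulT U (lin F q) = lin (\<lambda>x. lin (\<lambda>k. lin (\<lambda>y. sg (fst x @ fst y, snd x @ snd y)) (F k)) q) U"
    unfolding mulT_def by (simp add: split_def lin_comp)
  also have "\<dots> = lin (\<lambda>k. lin (\<lambda>x. lin (\<lambda>y. sg (fst x @ fst y, snd x @ snd y)) (F k)) U) q"
    by (rule lin_swap)
  also have "\<dots> = lin (\<lambda>k. mulT U (F k)) q"
    unfolding mulT_def by (simp add: split_def)
  finally show ?thesis .
qed

lemma mulT_expL: "mulT U V = lin (\<lambda>y. mulT (sg y) V) U"
  using mulT_linL[of sg U V] by simp

lemma mulT_sg[simp]: "mulT (sg (a, b)) (sg (c, e)) = sg (a @ c, b @ e)"
  by (simp add: mulT_def)

lemma mulT_unitR[simp]: "mulT U (sg ([], [])) = U"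
  by (simp add: mulT_def lin_id')

lemma mulT_unitL[simp]: "mulT (sg ([], [])) V = V"
  by (simp add: mulT_def lin_id')

lemma mulT_assoc: "mulT (mulT U V) W = mulT U (mulT V W)"
proof -
  have "mulT U V = lin (\<lambda>x. lin (\<lambda>y. sg (fst x @ fst y, snd x @ snd y)) V) U"
    by (simp add: mulT_def split_def)
  then have "mulT (mulT U V) W = lin (\<lambda>x. lin (\<lambda>y. mulT (sg (fst x @ fst y, snd x @ snd y)) W) V) U"
    by (simp add: mulT_linL)
  also have "\<dots> = lin (\<lambda>x. lin (\<lambda>y. mulT (sg x) (mulT (sg y) W)) V) U"
    by (simp add: mulT_def split_def lin_comp)
  also have "\<dots> = lin (\<lambda>x. mulT (sg x) (mulT V W)) U"
    by (simp only: mulT_linR[symmetric] mulT_expL[symmetric])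
  also have "\<dots> = mulT U (mulT V W)"
    by (simp add: mulT_linL[symmetric] lin_id)
  finally show ?thesis .
qed

lemma deltaF_Cons: "deltaF d \<delta> (p # ps) = mulT (deltaP d \<delta> p) (deltaF d \<delta> ps)"
  by (simp add: mulT_def)

lemma deltaF_app: "deltaF d \<delta> (u @ v) = mulT (deltaF d \<delta> u) (deltaF d \<delta> v)"
  by (induction u) (simp_all only: append.simps deltaF_Cons mulT_assoc deltaF.simps(1) mulT_unitL)

lemma DeltaAlg_add: "DeltaAlg d \<delta> (p + q) = DeltaAlg d \<delta> p + DeltaAlg d \<delta> q"
  by (simp add: DeltaAlg_def lin_add)

lemma DeltaAlg_zero[simp]: "DeltaAlg d \<delta> 0 = 0"
  by (simp add: DeltaAlg_def)

lemma DeltaAlg_smult: "DeltaAlg d \<delta> (smult c p) = smult c (DeltaAlg d \<delta> p)"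
  by (simp add: DeltaAlg_def lin_smult)

lemma DeltaAlg_sum: "DeltaAlg d \<delta> (sum g A) = (\<Sum>x\<in>A. DeltaAlg d \<delta> (g x))"
  by (simp add: DeltaAlg_def lin_sum)

lemma DeltaAlg_single[simp]: "DeltaAlg d \<delta> (sg [p]) = deltaP d \<delta> p"
  by (simp add: DeltaAlg_def deltaF_Cons)

lemma DeltaAlg_nil[simp]: "DeltaAlg d \<delta> (sg []) = sg ([], [])"
  by (simp add: DeltaAlg_def)

lemma DeltaAlg_mulF: "DeltaAlg d \<delta> (mulF p q) = mulT (DeltaAlg d \<delta> p) (DeltaAlg d \<delta> q)"
proof -
  have "DeltaAlg d \<delta> (mulF p q) = lin (\<lambda>k. lin (\<lambda>k'. mulT (deltaF d \<delta> k) (deltaF d \<delta> k')) q) p"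
    by (simp add: DeltaAlg_def mulF_def lin_comp deltaF_app)
  also have "\<dots> = mulT (DeltaAlg d \<delta> p) (DeltaAlg d \<delta> q)"
    unfolding DeltaAlg_def by (simp only: mulT_linL mulT_linR) (rule lin_swap)
  finally show ?thesis .
qed

lemma iota_mul: "mulT (iota f C) (iota g D) = iota (f @ g) (mulF C D)"
  by (simp add: iota_def mulF_def lin_comp mulT_linL mulT_linR) (rule lin_swap)

lemma Cm_P: "Cm (P a' b' c') (P a b c) = mulF (Cm a' a) (mulF (Cm b' b) (Cm c' c))"
  by (simp add: mulF_def lin_comp)


definition m3 :: "(tree \<times> planted list \<Rightarrow>\<^sub>0 real) \<Rightarrow> (tree \<times> planted list \<Rightarrow>\<^sub>0 real)
     \<Rightarrow> (tree \<times> planted list \<Rightarrow>\<^sub>0 real) \<Rightarrow> (tree \<times> planted list \<Rightarrow>\<^sub>0 real)" where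
  "m3 p1 p2 p3 =
     lin (\<lambda>(s1, f1). lin (\<lambda>(s2, f2). lin (\<lambda>(s3, f3). sg (P s1 s2 s3, f1 @ f2 @ f3)) p3) p2) p1"

definition Phi :: "tree \<Rightarrow> (tree \<times> planted list \<Rightarrow>\<^sub>0 real) \<Rightarrow> (planted list \<times> planted list \<Rightarrow>\<^sub>0 real)" where
  "Phi t D = lin (\<lambda>(\<sigma>, f). iota f (Cm t \<sigma>)) D"

lemmas deltaT_P = deltaT.simps(4)
declare deltaT.simps(4)[simp del]

lemma ord_gt: "0 < \<delta> \<Longrightarrow> ord \<delta> t > -3"
  by (induction t) auto

lemma ord_children:
  assumes "0 < \<delta>" "ord \<delta> (P a b c) \<le> 0"
  shows "ord \<delta> a \<le> 0 \<and> ord \<delta> b \<le> 0 \<and> ord \<delta> c \<le> 0"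
  using assms ord_gt[OF assms(1), of a] ord_gt[OF assms(1), of b] ord_gt[OF assms(1), of c] by auto

lemma W_children:
  assumes "0 < \<delta>" "inW \<delta> (P a b c)"
  shows "inW \<delta> a \<and> inW \<delta> b \<and> inW \<delta> c"
  using assms ord_gt[OF assms(1), of a] ord_gt[OF assms(1), of b] ord_gt[OF assms(1), of c]
  by (auto simp: inW_def)

lemma P_W_or_No: "ord \<delta> (P a b c) \<le> 0 \<Longrightarrow> inW \<delta> (P a b c) \<or> inNo \<delta> (P a b c)"
  by (auto simp: inW_def inNo_def inN_def isPoly_def)

lemma dI_W: "inW \<delta> a \<Longrightarrow> dI d \<delta> a D = sg (a, [])"
  by (cases a) (auto simp: dI_def inW_def)

lemma Xi_W: "\<delta> < 1 \<Longrightarrow> inW \<delta> Xi"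
  by (simp add: inW_def)

lemma dI_No: "inNo \<delta> (P a b c) \<Longrightarrow> \<not> inW \<delta> (P a b c) \<Longrightarrow> dI d \<delta> (P a b c) D =
   sg (One, [I (P a b c)]) + (\<Sum>i\<in>{1..d}. lin (\<lambda>w. sg (X i, w)) (mkIp \<delta> i (P a b c))) + D"
  by (simp add: dI_def)

lemma mkIp_P: "mkIp \<delta> i (P a b c) = (if inNt \<delta> (P a b c) then sg [Ip i (P a b c)] else 0)"
  by (simp add: mkIp_def)

lemma keys_mul3:
  "k \<in> Poly_Mapping.keys (mul3 \<delta> U V W) \<Longrightarrow> \<exists>s1 f1 s2 f2 s3 f3. (s1,f1) \<in> Poly_Mapping.keys U \<and>
     (s2,f2) \<in> Poly_Mapping.keys V \<and> (s3,f3) \<in> Poly_Mapping.keys W \<and> k = (P s1 s2 s3, f1 @ f2 @ f3)"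
  unfolding mul3_def
  by (fastforce dest!: keys_lin[THEN subsetD] split: if_splits prod.splits)

lemma dI_keys:
  assumes "a \<noteq> One" "\<And>j. a \<noteq> X j" "k \<in> Poly_Mapping.keys (dI d \<delta> a D)"
  shows "fst k = a \<or> (fst k = One \<and> inN \<delta> a) \<or> (\<exists>i. fst k = X i \<and> inNt \<delta> a)
         \<or> k \<in> Poly_Mapping.keys D"
proof -
  have dI: "dI d \<delta> a D = (if inW \<delta> a then sg (a, [])
           else if inNo \<delta> a then
             sg (One, [I a])
             + (\<Sum>i\<in>{1..d}. lin (\<lambda>w. sg (X i, w)) (mkIp \<delta> i a))
             + D
           else 0)"
    using assms(1,2) by (cases a) (auto simp: dI_def)
  have mk: "lin (\<lambda>w. sg (X i, w)) (mkIp \<delta> i a) = (if inNt \<delta> a then sg (X i, [Ip i a]) else 0)" for i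
    using assms(2) by (simp add: mkIp_def)
  show ?thesis
  proof (cases "inW \<delta> a")
    case True
    then show ?thesis using assms(3) unfolding dI by simp
  next
    case False
    show ?thesis
    proof (cases "inNo \<delta> a")
      case True
      let ?S = "\<Sum>i\<in>{1..d}. lin (\<lambda>w. sg (X i, w)) (mkIp \<delta> i a)"
      have k: "k \<in> Poly_Mapping.keys (sg (One, [I a]) + ?S + D)"
        using assms(3) True False unfolding dI by simp
      have "k \<in> Poly_Mapping.keys (sg (One, [I a])) \<or> k \<in> Poly_Mapping.keys ?S \<or> k \<in> Poly_Mapping.keys D"
        using keys_add[THEN subsetD, OF k] keys_add[THEN subsetD, of _ "sg (One, [I a])" ?S] by blast
      moreover have "k \<in> Poly_Mapping.keys ?S \<Longrightarrow> (\<exists>i. fst k = X i \<and> inNt \<delta> a)"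
      proof -
        assume "k \<in> Poly_Mapping.keys ?S"
        then obtain i where "k \<in> Poly_Mapping.keys (lin (\<lambda>w. sg (X i, w)) (mkIp \<delta> i a))"
          using keys_sum[THEN subsetD, OF \<open>k \<in> Poly_Mapping.keys ?S\<close>] by blast
        then show ?thesis unfolding mk by (simp split: if_splits)
      qed
      ultimately show ?thesis using True by (auto simp: inNo_def)
    next
      case False
      then show ?thesis using assms(3) \<open>\<not> inW \<delta> a\<close> unfolding dI by simp
    qed
  qed
qed

lemma bound:
  assumes "0 < \<delta>"
  shows "ord \<delta> a \<le> 0 \<Longrightarrow> (\<forall>k\<in>Poly_Mapping.keys (deltaT d \<delta> a). ord \<delta> (fst k) \<le> ord \<delta> a) \<and>
     (\<forall>k\<in>Poly_Mapping.keys (dI d \<delta> a (deltaT d \<delta> a)). ord \<delta> (fst k) \<le> ord \<delta> a)"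
proof (induction a)
  case One
  then show ?case by (simp add: dI_def)
next
  case (X i)
  then show ?case using keys_add[of "sg (One, [I (X i)])" "sg (X i, [Ip i (X i)])"] 
    by (auto simp: dI_def)
next
  case Xi
  have 1: "\<forall>k\<in>Poly_Mapping.keys (deltaT d \<delta> Xi). ord \<delta> (fst k) \<le> ord \<delta> Xi" by simp
  moreover have "\<forall>k\<in>Poly_Mapping.keys (dI d \<delta> Xi (deltaT d \<delta> Xi)). ord \<delta> (fst k) \<le> ord \<delta> Xi"
  proof
    fix k assume "k \<in> Poly_Mapping.keys (dI d \<delta> Xi (deltaT d \<delta> Xi))"
    from dI_keys[OF _ _ this] 1 show "ord \<delta> (fst k) \<le> ord \<delta> Xi"
      by (auto simp: inN_def inNt_def)
  qed
  ultimately show ?case by (rule conjI)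
next
  case (P a b c)
  have ch: "ord \<delta> a \<le> 0" "ord \<delta> b \<le> 0" "ord \<delta> c \<le> 0"
    using ord_children[OF assms P.prems] by auto
  have 1: "\<forall>k\<in>Poly_Mapping.keys (deltaT d \<delta> (P a b c)). ord \<delta> (fst k) \<le> ord \<delta> (P a b c)"
  proof
    fix k assume k: "k \<in> Poly_Mapping.keys (deltaT d \<delta> (P a b c))"
    show "ord \<delta> (fst k) \<le> ord \<delta> (P a b c)"
    proof (cases "inW \<delta> (P a b c)")
      case True
      then show ?thesis using k by (simp add: deltaT_P)
    next
      case False
      then have "k \<in> Poly_Mapping.keys (mul3 \<delta> (dI d \<delta> a (deltaT d \<delta> a)) (dI d \<delta> b (deltaT d \<delta> b)) (dI d \<delta> c (deltaT d \<delta> c)))"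
        using k P.prems by (simp add: deltaT_P)
      from keys_mul3[OF this] obtain s1 f1 s2 f2 s3 f3 where
        "(s1,f1) \<in> Poly_Mapping.keys (dI d \<delta> a (deltaT d \<delta> a))"
        "(s2,f2) \<in> Poly_Mapping.keys (dI d \<delta> b (deltaT d \<delta> b))"
        "(s3,f3) \<in> Poly_Mapping.keys (dI d \<delta> c (deltaT d \<delta> c))"
        "k = (P s1 s2 s3, f1 @ f2 @ f3)" by blast
      moreover have "ord \<delta> s1 \<le> ord \<delta> a" "ord \<delta> s2 \<le> ord \<delta> b" "ord \<delta> s3 \<le> ord \<delta> c"
        using P.IH ch calculation(1-3) by fastforce+
      ultimately show ?thesis by simp
    qed
  qed
  moreover have "\<forall>k\<in>Poly_Mapping.keys (dI d \<delta> (P a b c) (deltaT d \<delta> (P a b c))). ord \<delta> (fst k) \<le> ord \<delta> (P a b c)"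
  proof
    fix k assume "k \<in> Poly_Mapping.keys (dI d \<delta> (P a b c) (deltaT d \<delta> (P a b c)))"
    from dI_keys[OF _ _ this] have "fst k = P a b c \<or> fst k = One \<and> inN \<delta> (P a b c) \<or>
       (\<exists>i. fst k = X i \<and> inNt \<delta> (P a b c)) \<or> k \<in> Poly_Mapping.keys (deltaT d \<delta> (P a b c))" by simp
    then show "ord \<delta> (fst k) \<le> ord \<delta> (P a b c)"
      using 1 by (auto simp: inN_def inNt_def)
  qed
  ultimately show ?case by (rule conjI)
qed


lemma lin_cong3:
  assumes "\<And>s1 f1 s2 f2 s3 f3. (s1,f1) \<in> Poly_Mapping.keys U \<Longrightarrow> (s2,f2) \<in> Poly_Mapping.keys V \<Longrightarrow>
     (s3,f3) \<in> Poly_Mapping.keys W \<Longrightarrow> g s1 f1 s2 f2 s3 f3 = h s1 f1 s2 f2 s3 f3"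
  shows "lin (\<lambda>(s1, f1). lin (\<lambda>(s2, f2). lin (\<lambda>(s3, f3). g s1 f1 s2 f2 s3 f3) W) V) U
       = lin (\<lambda>(s1, f1). lin (\<lambda>(s2, f2). lin (\<lambda>(s3, f3). h s1 f1 s2 f2 s3 f3) W) V) U"
  apply (rule lin_cong)
  apply (clarsimp)
  apply (rule lin_cong)
  apply (clarsimp)
  apply (rule lin_cong)
  apply (clarsimp simp: assms)
  done

lemma deltaT_m3:
  assumes "0 < \<delta>" "ord \<delta> (P a b c) \<le> 0"
  shows "deltaT d \<delta> (P a b c) = m3 (dI d \<delta> a (deltaT d \<delta> a)) (dI d \<delta> b (deltaT d \<delta> b)) (dI d \<delta> c (deltaT d \<delta> c))"
proof (cases "inW \<delta> (P a b c)")
  case True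
  then have "inW \<delta> a" "inW \<delta> b" "inW \<delta> c" using W_children[OF assms(1) True] by blast+
  then show ?thesis using True by (simp add: deltaT_P dI_W m3_def)
next
  case False
  have ch: "ord \<delta> a \<le> 0" "ord \<delta> b \<le> 0" "ord \<delta> c \<le> 0"
    using ord_children[OF assms] by blast+
  have "deltaT d \<delta> (P a b c) = mul3 \<delta> (dI d \<delta> a (deltaT d \<delta> a)) (dI d \<delta> b (deltaT d \<delta> b)) (dI d \<delta> c (deltaT d \<delta> c))"
    using False assms(2) by (simp add: deltaT_P)
  also have "\<dots> = m3 (dI d \<delta> a (deltaT d \<delta> a)) (dI d \<delta> b (deltaT d \<delta> b)) (dI d \<delta> c (deltaT d \<delta> c))"
    unfolding mul3_def m3_def
  proof (rule lin_cong3)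
    fix s1 f1 s2 f2 s3 f3
    assume k: "(s1, f1) \<in> Poly_Mapping.keys (dI d \<delta> a (deltaT d \<delta> a))"
      "(s2, f2) \<in> Poly_Mapping.keys (dI d \<delta> b (deltaT d \<delta> b))"
      "(s3, f3) \<in> Poly_Mapping.keys (dI d \<delta> c (deltaT d \<delta> c))"
    have bd: "\<And>x. ord \<delta> x \<le> 0 \<Longrightarrow> \<forall>k\<in>Poly_Mapping.keys (dI d \<delta> x (deltaT d \<delta> x)). ord \<delta> (fst k) \<le> ord \<delta> x"
      using bound[OF assms(1)] by blast
    have "ord \<delta> s1 \<le> ord \<delta> a" using bd[OF ch(1)] k(1) by fastforce
    moreover have "ord \<delta> s2 \<le> ord \<delta> b" using bd[OF ch(2)] k(2) by fastforce
    moreover have "ord \<delta> s3 \<le> ord \<delta> c" using bd[OF ch(3)] k(3) by fastforce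
    ultimately have "ord \<delta> s1 \<le> ord \<delta> a \<and> ord \<delta> s2 \<le> ord \<delta> b \<and> ord \<delta> s3 \<le> ord \<delta> c" by blast
    then have "ord \<delta> (P s1 s2 s3) \<le> 0" using assms(2) by simp
    then show "(if ord \<delta> (P s1 s2 s3) \<le> 0 then sg (P s1 s2 s3, f1 @ f2 @ f3) else 0) = sg (P s1 s2 s3, f1 @ f2 @ f3)"
      by simp
  qed
  finally show ?thesis .
qed

lemma Phi_sg[simp]: "Phi t (sg (\<sigma>, f)) = iota f (Cm t \<sigma>)"
  by (simp add: Phi_def)

lemma Phi_lin: "Phi t (lin g p) = lin (\<lambda>k. Phi t (g k)) p"
  unfolding Phi_def by (rule lin_comp)

lemma Phi_add: "Phi t (U + V) = Phi t U + Phi t V"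
  by (simp add: Phi_def lin_add)

lemma Phi_zero[simp]: "Phi t 0 = 0"
  by (simp add: Phi_def)

lemma Phi_sum: "Phi t (sum g A) = (\<Sum>x\<in>A. Phi t (g x))"
  by (simp add: Phi_def lin_sum)

lemma iota_sg[simp]: "iota f (sg w) = sg (w, f)"
  by (simp add: iota_def)

lemma iota_zero[simp]: "iota f 0 = 0"
  by (simp add: iota_def)

lemma Cm_One: "Cm One a = sg [I a]"
  by (cases a) auto

lemma Cm_Xa: "Cm (X i) a = mkIm i a"
  by (cases a) (auto simp: mkIm_def isPoly_def)

lemma Cm_Xi: "Cm Xi a = (if a = Xi then sg [] else 0)"
  by (cases a) auto

lemma Phi_m3: "Phi (P b1 b2 b3) (m3 U V W) = mulT (Phi b1 U) (mulT (Phi b2 V) (Phi b3 W))"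
proof -
  have "Phi (P b1 b2 b3) (m3 U V W) = lin (\<lambda>k1. lin (\<lambda>k2. lin (\<lambda>k3.
      iota (snd k1 @ snd k2 @ snd k3) (mulF (Cm b1 (fst k1)) (mulF (Cm b2 (fst k2)) (Cm b3 (fst k3))))) W) V) U"
    unfolding m3_def by (simp del: Cm.simps add: Phi_lin split_def Cm_P)
  also have "\<dots> = lin (\<lambda>k1. lin (\<lambda>k2. lin (\<lambda>k3.
      mulT (iota (snd k1) (Cm b1 (fst k1))) (mulT (iota (snd k2) (Cm b2 (fst k2))) (iota (snd k3) (Cm b3 (fst k3))))) W) V) U"
    by (simp add: iota_mul)
  also have "\<dots> = mulT (lin (\<lambda>k. iota (snd k) (Cm b1 (fst k))) U)
     (mulT (lin (\<lambda>k. iota (snd k) (Cm b2 (fst k))) V) (lin (\<lambda>k. iota (snd k) (Cm b3 (fst k))) W))"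
    by (simp only: mulT_linL) (simp only: mulT_linR)
  also have "\<dots> = mulT (Phi b1 U) (mulT (Phi b2 V) (Phi b3 W))"
    by (simp add: Phi_def split_def)
  finally show ?thesis .
qed

lemma Phi_m3_Xi: "Phi Xi (m3 U V W) = 0"
  unfolding m3_def by (simp add: Phi_lin split_def)


lemma Phi_One: "Phi One D = lin (\<lambda>(\<sigma>, f). sg ([I \<sigma>], f)) D"
  by (simp add: Phi_def Cm_One)

lemma KL_One: "DeltaAlg d \<delta> (Cm One a) = Phi One (dI d \<delta> a (deltaT d \<delta> a))"
  by (simp add: Cm_One Phi_One deltaP_def)

lemma Phi_X: "Phi (X i) D = lin (\<lambda>(\<sigma>, f). iota f (mkIm i \<sigma>)) D"
  by (simp add: Phi_def Cm_Xa)

lemma not_inNt_Xi: "\<delta> < 1 \<Longrightarrow> \<not> inNt \<delta> Xi"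
  by (simp add: inNt_def inNo_def inN_def)

lemma inW_not_inNt: "inW \<delta> a \<Longrightarrow> \<not> inNt \<delta> a"
  by (simp add: inNt_def inNo_def inN_def inW_def)

lemma iota_mkIm_X: "lin (\<lambda>w. iota w (mkIm i (X j))) p = (if j = i then lin (\<lambda>w. sg ([Ip i (X i)], w)) p else 0)"
  by (cases "j = i") (simp_all add: mkIm_def isPoly_def)

lemma deltaP_Im_P: "deltaP d \<delta> (Im i (P a b c)) =
   Phi (X i) (deltaT d \<delta> (P a b c)) + lin (\<lambda>w. sg ([Ip i (X i)], w)) (mkIp \<delta> i (P a b c))"
  by (simp add: deltaP_def Phi_X isPoly_def iota_def)

lemma KL_X:
  assumes "0 < \<delta>" "\<delta> < 1" "1 \<le> i" "i \<le> d" "ord \<delta> a \<le> 0"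
  shows "DeltaAlg d \<delta> (Cm (X i) a) = Phi (X i) (dI d \<delta> a (deltaT d \<delta> a))"
proof (cases a)
  case One
  then show ?thesis by (simp add: Cm_Xa Phi_X dI_def mkIm_def isPoly_def)
next
  case (X j)
  then show ?thesis
    by (cases "j = i") (simp_all add: Cm_Xa Phi_X dI_def mkIm_def isPoly_def deltaP_def Phi_add[unfolded Phi_X])
next
  case Xi
  have "mkIp \<delta> i Xi = 0" using not_inNt_Xi[OF assms(2)] by (simp add: mkIp_def)
  then show ?thesis using Xi dI_W[OF Xi_W[OF assms(2)]]
    by (simp add: Cm_Xa Phi_X mkIm_def isPoly_def deltaP_def iota_def)
next
  case (P a1 a2 a3)
  have lhs: "DeltaAlg d \<delta> (Cm (X i) a) = Phi (X i) (deltaT d \<delta> a) + lin (\<lambda>w. sg ([Ip i (X i)], w)) (mkIp \<delta> i a)"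
    using P by (simp add: Cm_Xa mkIm_def isPoly_def deltaP_Im_P)
  show ?thesis
  proof (cases "inW \<delta> a")
    case True
    then have "mkIp \<delta> i a = 0" using P inW_not_inNt[OF True] by (simp add: mkIp_def)
    then show ?thesis using lhs True P dI_W[OF True] by (simp add: deltaT_P)
  next
    case False
    then have No: "inNo \<delta> a" using P_W_or_No assms(5) P by blast
    have "Phi (X i) (dI d \<delta> a (deltaT d \<delta> a)) = Phi (X i) (sg (One, [I a]))
       + (\<Sum>j\<in>{1..d}. lin (\<lambda>w. Phi (X i) (sg (X j, w))) (mkIp \<delta> j a)) + Phi (X i) (deltaT d \<delta> a)"
      using P dI_No[OF No[unfolded P] False[unfolded P]] by (simp add: Phi_add Phi_sum Phi_lin)
    also have "\<dots> = (\<Sum>j\<in>{1..d}. if j = i then lin (\<lambda>w. sg ([Ip i (X i)], w)) (mkIp \<delta> i a) else 0) + Phi (X i) (deltaT d \<delta> a)"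
      by (simp add: iota_mkIm_X)
    also have "\<dots> = lin (\<lambda>w. sg ([Ip i (X i)], w)) (mkIp \<delta> i a) + Phi (X i) (deltaT d \<delta> a)"
      using assms(3,4) by (simp add: sum.delta')
    finally show ?thesis using lhs by (simp add: add.commute)
  qed
qed

lemma KL_Xi:
  assumes "0 < \<delta>" "\<delta> < 1" "ord \<delta> a \<le> 0"
  shows "DeltaAlg d \<delta> (Cm Xi a) = Phi Xi (dI d \<delta> a (deltaT d \<delta> a))"
proof (cases a)
  case One
  then show ?thesis by (simp add: dI_def)
next
  case (X j)
  then show ?thesis by (simp add: dI_def Phi_add)
next
  case Xi
  then show ?thesis using dI_W[OF Xi_W[OF assms(2)]] by simp
next
  case (P a1 a2 a3)
  show ?thesis
  proof (cases "inW \<delta> a")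
    case True
    then show ?thesis using P dI_W[OF True] by simp
  next
    case False
    then have No: "inNo \<delta> a" using P_W_or_No assms(3) P by blast
    have "Phi Xi (deltaT d \<delta> a) = 0"
      using P deltaT_m3[OF assms(1) assms(3)[unfolded P]] Phi_m3_Xi by simp
    then show ?thesis
      using P dI_No[OF No[unfolded P] False[unfolded P]] by (simp add: Phi_add Phi_sum Phi_lin)
  qed
qed

lemma PhiP_DI:
  assumes "0 < \<delta>" "ord \<delta> (P a1 a2 a3) \<le> 0"
  shows "Phi (P b1 b2 b3) (dI d \<delta> (P a1 a2 a3) (deltaT d \<delta> (P a1 a2 a3))) = Phi (P b1 b2 b3) (deltaT d \<delta> (P a1 a2 a3))"
proof (cases "inW \<delta> (P a1 a2 a3)")
  case True
  then show ?thesis using dI_W[OF True] by (simp add: deltaT_P)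
next
  case False
  then have No: "inNo \<delta> (P a1 a2 a3)" using P_W_or_No assms(2) by blast
  show ?thesis using dI_No[OF No False] by (simp add: Phi_add Phi_sum Phi_lin)
qed

lemma KL_Pt_nonP:
  assumes "\<delta> < 1" "\<And>x y z. a \<noteq> P x y z"
  shows "DeltaAlg d \<delta> (Cm (P b1 b2 b3) a) = Phi (P b1 b2 b3) (dI d \<delta> a (deltaT d \<delta> a))"
  using dI_W[OF Xi_W[OF assms(1)]]
proof (cases a)
  case (P x y z) then show ?thesis using assms(2) by blast
qed (simp_all add: dI_def Phi_add)

lemma KL_base:
  assumes "0 < \<delta>" "\<delta> < 1" "valid d t" "ord \<delta> a \<le> 0" "\<And>x y z. a \<noteq> P x y z"
  shows "DeltaAlg d \<delta> (Cm t a) = Phi t (dI d \<delta> a (deltaT d \<delta> a))"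
proof (cases t)
  case One
  then show ?thesis by (simp only: KL_One)
next
  case (X i)
  then show ?thesis using assms(3) by (intro KL_X[OF assms(1,2) _ _ assms(4), of i d, unfolded X[symmetric]]) simp_all
next
  case Xi
  then show ?thesis by (simp only: KL_Xi[OF assms(1,2,4)])
next
  case (P b1 b2 b3)
  then show ?thesis by (simp only: KL_Pt_nonP[OF assms(2,5)])
qed

lemma KL:
  assumes "0 < \<delta>" "\<delta> < 1"
  shows "valid d t \<Longrightarrow> ord \<delta> a \<le> 0 \<Longrightarrow> DeltaAlg d \<delta> (Cm t a) = Phi t (dI d \<delta> a (deltaT d \<delta> a))"
proof (induction a arbitrary: t)
  case (P a1 a2 a3)
  show ?case
  proof (cases t)
    case One
    then show ?thesis by (simp only: KL_One)
  next
    case (X i)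
    then show ?thesis using P.prems(1) by (intro KL_X[OF assms _ _ P.prems(2), of i d, unfolded X[symmetric]]) simp_all
  next
    case Xi
    then show ?thesis by (simp only: KL_Xi[OF assms P.prems(2)])
  next
    case (P b1 b2 b3)
    have ch: "ord \<delta> a1 \<le> 0" "ord \<delta> a2 \<le> 0" "ord \<delta> a3 \<le> 0"
      using ord_children[OF assms(1) P.prems(2)] by blast+
    have v: "valid d b1" "valid d b2" "valid d b3" using P.prems(1) P by simp_all
    have "DeltaAlg d \<delta> (Cm t (P a1 a2 a3)) = mulT (DeltaAlg d \<delta> (Cm b1 a1)) (mulT (DeltaAlg d \<delta> (Cm b2 a2)) (DeltaAlg d \<delta> (Cm b3 a3)))"
      using P by (simp del: Cm.simps add: Cm_P DeltaAlg_mulF)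
    also have "\<dots> = mulT (Phi b1 (dI d \<delta> a1 (deltaT d \<delta> a1))) (mulT (Phi b2 (dI d \<delta> a2 (deltaT d \<delta> a2))) (Phi b3 (dI d \<delta> a3 (deltaT d \<delta> a3))))"
      using P.IH v ch by simp
    also have "\<dots> = Phi t (deltaT d \<delta> (P a1 a2 a3))"
      using P deltaT_m3[OF assms(1) P.prems(2)] Phi_m3 by simp
    also have "\<dots> = Phi t (dI d \<delta> (P a1 a2 a3) (deltaT d \<delta> (P a1 a2 a3)))"
      using P PhiP_DI[OF assms(1) P.prems(2)] by simp
    finally show ?thesis .
  qed
next
  case One
  show ?case by (rule KL_base[OF assms One.prems]) simp
next
  case (X j)
  show ?case by (rule KL_base[OF assms X.prems]) simp
next
  case Xi
  show ?case by (rule KL_base[OF assms Xi.prems]) simp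
qed


lemma qF_Cm: "qF t = Cm (P One One One) t"
  by (cases t) (simp_all add: Cm_One)

lemma RtensId_Phi: "RtensId d \<delta> r D = Phi (P One One One) D + (\<Sum>t\<in>Qset d \<delta>. smult (r t) (Phi t D))"
proof -
  have "RtensId d \<delta> r D = lin (\<lambda>k. iota (snd k) (Cm (P One One One) (fst k)) +
      (\<Sum>t\<in>Qset d \<delta>. smult (r t) (iota (snd k) (Cm t (fst k))))) D"
    unfolding RtensId_def Rop_def
    by (simp del: Cm.simps add: split_def iota_def lin_add lin_sum lin_smult qF_Cm)
  also have "\<dots> = lin (\<lambda>k. iota (snd k) (Cm (P One One One) (fst k))) D +
      (\<Sum>t\<in>Qset d \<delta>. smult (r t) (lin (\<lambda>k. iota (snd k) (Cm t (fst k))) D))"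
    by (simp only: lin_fadd lin_fsum lin_fsmult)
  also have "\<dots> = Phi (P One One One) D + (\<Sum>t\<in>Qset d \<delta>. smult (r t) (Phi t D))"
    by (simp add: Phi_def split_def)
  finally show ?thesis .
qed

lemma mainlem:
  assumes "0 < \<delta>" "\<delta> < 1" "valid d (P bu bv bw)" "ord \<delta> (P a1 a2 a3) \<le> 0"
  shows "DeltaAlg d \<delta> (Cm (P bu bv bw) (P a1 a2 a3)) = Phi (P bu bv bw) (deltaT d \<delta> (P a1 a2 a3))"
  using KL[OF assms(1,2,3,4)] PhiP_DI[OF assms(1,4)] by simp

lemma Qset_P: "t \<in> Qset d \<delta> \<Longrightarrow> \<exists>b1 b2 b3. t = P b1 b2 b3 \<and> valid d t"
  unfolding Qset_def by blast

theorem lemma8p7: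
  fixes d :: nat and \<delta> :: real and r :: "tree \<Rightarrow> real" and \<tau> :: tree
  assumes "d \<ge> 1" and "0 < \<delta>" and "\<delta> < 1"
    and standing: "\<And>\<sigma>. valid d \<sigma> \<Longrightarrow> inW \<delta> \<sigma> \<or> inNo \<delta> \<sigma> \<Longrightarrow> \<sigma> \<noteq> P One One One
                     \<Longrightarrow> ord \<delta> \<sigma> \<notin> \<int>"
    and r_sym: "\<And>a b c. P a b c \<in> Qset d \<delta> \<Longrightarrow>
                  r (P a b c) = r (P b a c) \<and> r (P a b c) = r (P a c b) \<and>
                  r (P a b c) = r (P c b a) \<and> r (P a b c) = r (P b c a) \<and>
                  r (P a b c) = r (P c a b)"
    and "valid d \<tau>" and "inNo \<delta> \<tau> \<or> inWo \<delta> \<tau>"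
  shows "DeltaAlg d \<delta> (Rop d \<delta> r \<tau>) = RtensId d \<delta> r (deltaT d \<delta> \<tau>)"
proof -
  have shape: "\<exists>a b c. \<tau> = P a b c"
    using assms(3,7) by (cases \<tau>) (auto simp: inNo_def inWo_def inW_def inN_def isPoly_def)
  then obtain a b c where tau: "\<tau> = P a b c" by blast
  have ordt: "ord \<delta> (P a b c) \<le> 0"
    using assms(7) tau by (auto simp: inNo_def inWo_def inW_def inN_def)
  have M: "DeltaAlg d \<delta> (Cm t \<tau>) = Phi t (deltaT d \<delta> \<tau>)" if t_in: "t \<in> Qset d \<delta>" for t
  proof -
    obtain b1 b2 b3 where "t = P b1 b2 b3" "valid d t" using Qset_P[OF t_in] by blast
    then show ?thesis using mainlem[OF assms(2,3) _ ordt] tau by simp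
  qed
  have M0: "DeltaAlg d \<delta> (Cm (P One One One) \<tau>) = Phi (P One One One) (deltaT d \<delta> \<tau>)"
    using mainlem[OF assms(2,3) _ ordt, where bu=One and bv=One and bw=One] tau by simp
  have "DeltaAlg d \<delta> (Rop d \<delta> r \<tau>) = DeltaAlg d \<delta> (Cm (P One One One) \<tau>) +
      (\<Sum>t\<in>Qset d \<delta>. smult (r t) (DeltaAlg d \<delta> (Cm t \<tau>)))"
    unfolding Rop_def qF_Cm by (simp only: DeltaAlg_add DeltaAlg_sum DeltaAlg_smult)
  also have "\<dots> = Phi (P One One One) (deltaT d \<delta> \<tau>) + (\<Sum>t\<in>Qset d \<delta>. smult (r t) (Phi t (deltaT d \<delta> \<tau>)))"
    using M M0 by simp
  also have "\<dots> = RtensId d \<delta> r (deltaT d \<delta> \<tau>)"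
    by (simp only: RtensId_Phi)
  finally show ?thesis .
qed

end
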